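(* Let $U$ be a countably infinite universe, $\mathcal{C}=(L_1,L_2,\ldots)$ a countably infinite collection of languages over $U$, $\mathcal{A}=\{A_g\}_{g\in[K]}$ a partition of $U$ into finitely many groups, $\alpha\in[0,1]$, and consider the Representative Procedure in the context. For every $i\ge1$ and every $t\ge i$, let $k$ be the position of the entry $L_i$ in $\mathcal{C}'_t=(L'_1,\ldots,L'_t)$ at the end of iteration $t$. Then $T(L_i)$ is a set of maximum size among all sets $T$ satisfying: $T$ is finite, and there exists a subcollection $\mathcal{D}$ of the entries $(L'_1,\ldots,L'_k)$ that includes $L'_k$, such that every $L\in\mathcal{D}$ contains $T$ and $T$ suffers group scarcity with respect to $\mathcal{D}$ and $\mathcal{A}$.
   Context: A language is an infinite subset of $U$; a collection is a sequence of languages (repetitions allowed, entries distinguished by index). For a finite nonempty $T\subseteq U$, $\mathrm{emp}_T$ is the uniform distribution on $T$, and for a distribution $D$ on $U$, $D^{\mathcal{A}}(g)=\Pr_{x\sim D}[x\in A_g]$. Scarce groups: for a collection $\mathcal{D}$ of languages and finite $T$, let $B=\{g\in[K]: A_g\cap((\bigcap_{L\in\mathcal{D}}L)\setminus T)=\emptyset\}$; $T$ suffers group scarcity w.r.t. $\mathcal{D}$ and $\mathcal{A}$ if some $g\in B$ has $\mathrm{emp}_T^{\mathcal{A}}(g)>\alpha$, or $\sum_{g\in B}\mathrm{emp}_T^{\mathcal{A}}(g)>\alpha(K-|B|)$. Representative Procedure. Set $\mathcal{C}'_0=()$. For $i=1,2,\ldots$: append $L_i$ to the end of $\mathcal{C}'_{i-1}$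 to get $\mathcal{C}'_i=(L'_1,\ldots,L'_i)$, set $j=i$. Repeat: (i) let $T$ be a finite (nonempty) set of largest size for which there is a subcollection $\mathcal{D}$ of the entries $(L'_1,\ldots,L'_j)$ including $L'_j$ with $T\subseteq L$ for all $L\in\mathcal{D}$ and $T$ suffering group scarcity w.r.t. $\mathcal{D}$ and $\mathcal{A}$; let $\mathcal{C}_{\mathrm{chk}}$ be such a $\mathcal{D}$ and $m_{\mathrm{chk}}=|T|$ ($0$ if none exists). (ii) If $j\le1$ or $m_{\mathrm{chk}}>m^\star_\alpha(L'_{j-1})$, stop. (iii) Otherwise swap the entries at positions $j-1,j$ in $\mathcal{C}'_i$, set $j\leftarrow j-1$, return to (i). On stopping, set $T(L_i)=T$, $\mathcal{C}(L_i)=\mathcal{C}_{\mathrm{chk}}$, $m^\star_\alpha(L_i)=m_{\mathrm{chk}}$; the ordering $\mathcal{C}'_t$ at the end of iteration $t$ is the one obtained when the loop of iteration $t$ stops. *)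

theory Defs
  imports Complex_Main "HOL-Library.Countable_Set"
begin

text \<open>Groups are indexed by [K] = {1..K}; languages of the collection by 1,2,3,...
  An ordering C'_t is a list of original language indices; the entry at 0-based
  list position p is the language L (P ! p).\<close>

definition is_partition :: "nat \<Rightarrow> (nat \<Rightarrow> 'u set) \<Rightarrow> bool" where
  "is_partition K A \<longleftrightarrow>
     (\<forall>g\<in>{1..K}. A g \<noteq> {}) \<and>
     (\<forall>g\<in>{1..K}. \<forall>h\<in>{1..K}. g \<noteq> h \<longrightarrow> A g \<inter> A h = {}) \<and>
     (\<Union>g\<in>{1..K}. A g) = UNIV"

definition emp_grp :: "(nat \<Rightarrow> 'u set) \<Rightarrow> 'u set \<Rightarrow> nat \<Rightarrow> real" where
  "emp_grp A T g = real (card (T \<inter> A g)) / real (card T)"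

text \<open>Group scarcity of T w.r.t. a collection whose intersection is I.\<close>
definition scarce :: "nat \<Rightarrow> (nat \<Rightarrow> 'u set) \<Rightarrow> real \<Rightarrow> 'u set \<Rightarrow> 'u set \<Rightarrow> bool" where
  "scarce K A \<alpha> I T \<longleftrightarrow>
     (let B = {g\<in>{1..K}. A g \<inter> (I - T) = {}} in
       (\<exists>g\<in>B. emp_grp A T g > \<alpha>) \<or>
       (\<Sum>g\<in>B. emp_grp A T g) > \<alpha> * real (K - card B))"

definition feasible ::
  "(nat \<Rightarrow> 'u set) \<Rightarrow> nat \<Rightarrow> (nat \<Rightarrow> 'u set) \<Rightarrow> real \<Rightarrow> nat list \<Rightarrow> 'u set \<Rightarrow> bool" where
  "feasible L K A \<alpha> P T \<longleftrightarrow> finite T \<and> T \<noteq> {} \<and>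
     (\<exists>D. D \<subseteq> {..<length P} \<and> length P - 1 \<in> D \<and> (\<forall>p\<in>D. T \<subseteq> L (P ! p)) \<and>
          scarce K A \<alpha> (\<Inter>p\<in>D. L (P ! p)) T)"

text \<open>T is a feasible set of largest size; by convention T = {} (size 0) if none exists.\<close>
definition is_max_set ::
  "(nat \<Rightarrow> 'u set) \<Rightarrow> nat \<Rightarrow> (nat \<Rightarrow> 'u set) \<Rightarrow> real \<Rightarrow> nat list \<Rightarrow> 'u set \<Rightarrow> bool" where
  "is_max_set L K A \<alpha> P T \<longleftrightarrow>
     (feasible L K A \<alpha> P T \<and> (\<forall>T'. feasible L K A \<alpha> P T' \<longrightarrow> card T' \<le> card T)) \<or>
     (T = {} \<and> \<not> (\<exists>T'. feasible L K A \<alpha> P T'))"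

text \<open>A run of the Representative Procedure: ord t is C'_t (end of iteration t),
  Tsel i = T(L_i), mstar i = m*_alpha(L_i). In iteration i, L_i is appended and
  bubbled down to its final (1-based) position j; at every position j' with j < j' \<le> i
  the loop did not stop (m_chk \<le> m*(L'_{j'-1})), at position j it stopped.\<close>
definition rep_run ::
  "(nat \<Rightarrow> 'u set) \<Rightarrow> nat \<Rightarrow> (nat \<Rightarrow> 'u set) \<Rightarrow> real \<Rightarrow>
   (nat \<Rightarrow> nat list) \<Rightarrow> (nat \<Rightarrow> 'u set) \<Rightarrow> (nat \<Rightarrow> nat) \<Rightarrow> bool" where
  "rep_run L K A \<alpha> ord Tsel mstar \<longleftrightarrow>
     ord 0 = [] \<and>
     (\<forall>i\<ge>1. \<exists>j. 1 \<le> j \<and> j \<le> i \<and>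
        ord i = take (j - 1) (ord (i - 1)) @ [i] @ drop (j - 1) (ord (i - 1)) \<and>
        (\<forall>j'. j < j' \<and> j' \<le> i \<longrightarrow>
           (\<exists>T. is_max_set L K A \<alpha> (take (j' - 1) (ord (i - 1)) @ [i]) T \<and>
                card T \<le> mstar (ord (i - 1) ! (j' - 2)))) \<and>
        is_max_set L K A \<alpha> (take (j - 1) (ord (i - 1)) @ [i]) (Tsel i) \<and>
        mstar i = card (Tsel i) \<and>
        (j = 1 \<or> card (Tsel i) > mstar (ord (i - 1) ! (j - 2))))"

end

theory Submission
  imports Defs
begin

definition feas2 where
  "feas2 L K A \<alpha> E a T \<longleftrightarrow> finite T \<and> T \<noteq> {} \<and>
     (\<exists>S. S \<subseteq> insert a E \<and> a \<in> S \<and> (\<forall>x\<in>S. T \<subseteq> L x) \<and> scarce K A \<alpha> (\<Inter>x\<in>S. L x) T)"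

definition ims2 where
  "ims2 L K A \<alpha> E a T \<longleftrightarrow>
     (feas2 L K A \<alpha> E a T \<and> (\<forall>T'. feas2 L K A \<alpha> E a T' \<longrightarrow> card T' \<le> card T)) \<or>
     (T = {} \<and> \<not> (\<exists>T'. feas2 L K A \<alpha> E a T'))"

lemma feasible_eq: "feasible L K A \<alpha> (xs @ [a]) T = feas2 L K A \<alpha> (set xs) a T"
proof
  assume "feasible L K A \<alpha> (xs @ [a]) T"
  then obtain D where fin: "finite T" "T \<noteq> {}" and D: "D \<subseteq> {..<length (xs @ [a])}"
    "length (xs @ [a]) - 1 \<in> D" "\<forall>p\<in>D. T \<subseteq> L ((xs @ [a]) ! p)"
    "scarce K A \<alpha> (\<Inter>p\<in>D. L ((xs @ [a]) ! p)) T"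
    unfolding feasible_def by blast
  define S where "S = (\<lambda>p. (xs @ [a]) ! p) ` D"
  have "S \<subseteq> insert a (set xs)" unfolding S_def using D(1)
    by (auto simp: nth_append)
  moreover have "a \<in> S" unfolding S_def using D(2)
    by (metis diff_Suc_1 image_eqI length_append_singleton nth_append_length)
  moreover have "\<forall>x\<in>S. T \<subseteq> L x" unfolding S_def using D(3) by auto
  moreover have "(\<Inter>x\<in>S. L x) = (\<Inter>p\<in>D. L ((xs @ [a]) ! p))" unfolding S_def by auto
  ultimately show "feas2 L K A \<alpha> (set xs) a T" unfolding feas2_def
    apply (intro conjI fin exI[of _ S])
        apply assumption+
    apply (simp only:)
    apply (rule D(4))
    done
next
  assume "feas2 L K A \<alpha> (set xs) a T"
  then obtain S where fin: "finite T" "T \<noteq> {}" and S: "S \<subseteq> insert a (set xs)" "a \<in> S"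
    "\<forall>x\<in>S. T \<subseteq> L x" "scarce K A \<alpha> (\<Inter>x\<in>S. L x) T"
    unfolding feas2_def by blast
  define P where "P = xs @ [a]"
  define D where "D = {p. p < length P \<and> P ! p \<in> S}"
  have SP: "S \<subseteq> set P" using S(1) unfolding P_def by auto
  have img: "(\<lambda>p. P ! p) ` D = S"
  proof
    show "(\<lambda>p. P ! p) ` D \<subseteq> S" unfolding D_def by auto
    show "S \<subseteq> (\<lambda>p. P ! p) ` D"
    proof
      fix x assume "x \<in> S"
      then obtain p where "p < length P" "P ! p = x" using SP by (meson in_set_conv_nth subsetD)
      then show "x \<in> (\<lambda>p. P ! p) ` D" unfolding D_def using \<open>x \<in> S\<close> by auto
    qed
  qed
  have "(\<Inter>p\<in>D. L (P ! p)) = (\<Inter>x\<in>S. L x)" using img by auto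
  moreover have "D \<subseteq> {..<length P}" unfolding D_def by auto
  moreover have "length P - 1 \<in> D" unfolding D_def P_def using S(2) by simp
  moreover have "\<forall>p\<in>D. T \<subseteq> L (P ! p)" unfolding D_def using S(3) by auto
  ultimately show "feasible L K A \<alpha> (xs @ [a]) T" unfolding feasible_def P_def[symmetric]
    apply (intro conjI fin exI[of _ D])
        apply assumption+
    apply (simp only:)
    apply (rule S(4))
    done
qed

lemma ims_eq: "is_max_set L K A \<alpha> (xs @ [a]) T = ims2 L K A \<alpha> (set xs) a T"
  unfolding is_max_set_def ims2_def feasible_eq by simp

lemma feas2_mono:
  assumes "E \<subseteq> E'" "feas2 L K A \<alpha> E a T"
  shows "feas2 L K A \<alpha> E' a T"
proof -
  obtain S where fin: "finite T" "T \<noteq> {}" and S: "S \<subseteq> insert a E" "a \<in> S"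
    "\<forall>x\<in>S. T \<subseteq> L x" "scarce K A \<alpha> (\<Inter>x\<in>S. L x) T"
    using assms(2) unfolding feas2_def by blast
  have "S \<subseteq> insert a E'" using S(1) assms(1) by blast
  then show ?thesis unfolding feas2_def using fin S(2,3,4) by blast
qed

lemma feas2_split:
  assumes "feas2 L K A \<alpha> (insert t E) a T"
  shows "feas2 L K A \<alpha> E a T \<or> feas2 L K A \<alpha> (insert a E) t T"
proof -
  obtain S where fin: "finite T" "T \<noteq> {}" and S: "S \<subseteq> insert a (insert t E)" "a \<in> S"
    "\<forall>x\<in>S. T \<subseteq> L x" "scarce K A \<alpha> (\<Inter>x\<in>S. L x) T"
    using assms unfolding feas2_def by blast
  show ?thesis
  proof (cases "t \<in> S")
    case True
    have "S \<subseteq> insert t (insert a E)" using S(1) by blast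
    then have "feas2 L K A \<alpha> (insert a E) t T" unfolding feas2_def
      using fin True S(3,4) by blast
    then show ?thesis by (rule disjI2)
  next
    case False
    have "S \<subseteq> insert a E" using S(1) False by blast
    then have "feas2 L K A \<alpha> E a T" unfolding feas2_def
      using fin S(2,3,4) by blast
    then show ?thesis by (rule disjI1)
  qed
qed

lemma ims2_step:
  assumes "ims2 L K A \<alpha> E a T0"
    and bd: "\<And>T. feas2 L K A \<alpha> (insert a E) t T \<Longrightarrow> card T \<le> card T0"
  shows "ims2 L K A \<alpha> (insert t E) a T0"
proof -
  have up: "card T' \<le> card T0" if fT: "feas2 L K A \<alpha> (insert t E) a T'"
     and m: "\<And>T'. feas2 L K A \<alpha> E a T' \<Longrightarrow> card T' \<le> card T0" for T'
  proof -
    from feas2_split[OF fT] show ?thesis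
    proof
      assume "feas2 L K A \<alpha> E a T'" then show ?thesis by (rule m)
    next
      assume "feas2 L K A \<alpha> (insert a E) t T'" then show ?thesis by (rule bd)
    qed
  qed
  from assms(1) consider
      (a) "feas2 L K A \<alpha> E a T0" "\<forall>T'. feas2 L K A \<alpha> E a T' \<longrightarrow> card T' \<le> card T0"
    | (b) "T0 = {}" "\<not> (\<exists>T'. feas2 L K A \<alpha> E a T')"
    unfolding ims2_def by blast
  then show ?thesis
  proof cases
    case a
    have sub: "E \<subseteq> insert t E" by blast
    have f: "feas2 L K A \<alpha> (insert t E) a T0" by (rule feas2_mono[OF sub a(1)])
    have "\<forall>T'. feas2 L K A \<alpha> (insert t E) a T' \<longrightarrow> card T' \<le> card T0"
    proof (intro allI impI)
      fix T' assume "feas2 L K A \<alpha> (insert t E) a T'"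
      then show "card T' \<le> card T0" using up a(2) by blast
    qed
    then show ?thesis unfolding ims2_def using f by blast
  next
    case b
    have "\<not> (\<exists>T'. feas2 L K A \<alpha> (insert t E) a T')"
    proof
      assume "\<exists>T'. feas2 L K A \<alpha> (insert t E) a T'"
      then obtain T' where fT: "feas2 L K A \<alpha> (insert t E) a T'" by blast
      have "card T' \<le> card T0" using up[OF fT] b(2) by blast
      moreover have "finite T'" "T' \<noteq> {}" using fT unfolding feas2_def by blast+
      ultimately show False using b(1) by simp
    qed
    then show ?thesis unfolding ims2_def using b(1) by blast
  qed
qed

lemma main_inv:
  assumes R: "rep_run L K A \<alpha> ord Tsel mstar"
  shows "distinct (ord t) \<and> set (ord t) = {1..t} \<and>
    (\<forall>k<length (ord t). ims2 L K A \<alpha> (set (take k (ord t))) (ord t ! k) (Tsel (ord t ! k)))"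
proof (induction t)
  case 0
  then show ?case using R unfolding rep_run_def by simp
next
  case (Suc n)
  define P where "P = ord n"
  have dP: "distinct P" and sP: "set P = {1..n}" and iP:
    "\<forall>k<length P. ims2 L K A \<alpha> (set (take k P)) (P ! k) (Tsel (P ! k))"
    using Suc unfolding P_def by auto
  have lP: "length P = n" using dP sP distinct_card by fastforce
  have Rall: "\<forall>i\<ge>1. \<exists>j. 1 \<le> j \<and> j \<le> i \<and>
        ord i = take (j - 1) (ord (i - 1)) @ [i] @ drop (j - 1) (ord (i - 1)) \<and>
        (\<forall>j'. j < j' \<and> j' \<le> i \<longrightarrow>
           (\<exists>T. is_max_set L K A \<alpha> (take (j' - 1) (ord (i - 1)) @ [i]) T \<and>
                card T \<le> mstar (ord (i - 1) ! (j' - 2)))) \<and>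
        is_max_set L K A \<alpha> (take (j - 1) (ord (i - 1)) @ [i]) (Tsel i) \<and>
        mstar i = card (Tsel i) \<and>
        (j = 1 \<or> card (Tsel i) > mstar (ord (i - 1) ! (j - 2)))"
    using R unfolding rep_run_def by blast
  have ms: "mstar a = card (Tsel a)" if "a \<ge> 1" for a
    using Rall[rule_format, OF that] by (elim exE conjE)
  obtain j where j1: "1 \<le> j" and j2: "j \<le> Suc n"
    and oS: "ord (Suc n) = take (j - 1) P @ [Suc n] @ drop (j - 1) P"
    and bnd: "\<forall>j'. j < j' \<and> j' \<le> Suc n \<longrightarrow>
           (\<exists>T. is_max_set L K A \<alpha> (take (j' - 1) P @ [Suc n]) T \<and>
                card T \<le> mstar (P ! (j' - 2)))"
    and mx: "is_max_set L K A \<alpha> (take (j - 1) P @ [Suc n]) (Tsel (Suc n))"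
  proof -
    have "Suc n \<ge> 1" by simp
    note X = Rall[rule_format, OF this, unfolded diff_Suc_1 P_def[symmetric]]
    from X show ?thesis by (elim exE conjE) (rule that)
  qed
  define m where "m = j - 1"
  have mn: "m \<le> n" using j2 unfolding m_def by simp
  have oS': "ord (Suc n) = take m P @ [Suc n] @ drop m P" using oS m_def by simp
  have nin: "Suc n \<notin> set P" using sP by auto
  have dist: "distinct (ord (Suc n))" unfolding oS'
  proof -
    have d1: "distinct (take m P)" "distinct (drop m P)" using dP by auto
    have d2: "set (take m P) \<inter> set (drop m P) = {}"
      using dP set_take_disj_set_drop_if_distinct by blast
    have d3: "Suc n \<notin> set (take m P)" "Suc n \<notin> set (drop m P)"
      using nin in_set_takeD in_set_dropD by metis+
    show "distinct (take m P @ [Suc n] @ drop m P)" using d1 d2 d3 by auto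
  qed
  have st: "set (ord (Suc n)) = {1..Suc n}" unfolding oS'
  proof -
    have u: "set (take m P) \<union> set (drop m P) = set P" by (metis append_take_drop_id set_append)
    have "set (take m P @ [Suc n] @ drop m P) = set (take m P) \<union> (set [Suc n] \<union> set (drop m P))"
      by (simp only: set_append)
    also have "\<dots> = insert (Suc n) (set P)" using u by auto
    also have "\<dots> = {1..Suc n}" using sP by auto
    finally show "set (take m P @ [Suc n] @ drop m P) = {1..Suc n}" .
  qed
  have lS: "length (ord (Suc n)) = Suc n" unfolding oS' using lP mn by simp
  have inv: "ims2 L K A \<alpha> (set (take k (ord (Suc n)))) (ord (Suc n) ! k) (Tsel (ord (Suc n) ! k))"
    if k: "k < Suc n" for k
  proof -
    consider "k < m" | "k = m" | "m < k" by linarith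
    then show ?thesis
    proof cases
      case 1
      have "ord (Suc n) ! k = P ! k" unfolding oS' using 1 mn lP by (simp add: nth_append)
      moreover have "take k (ord (Suc n)) = take k P" unfolding oS' using 1 mn lP by simp
      ultimately show ?thesis using iP 1 mn lP by simp
    next
      case 2
      have "ord (Suc n) ! k = Suc n" unfolding oS' using 2 mn lP by (simp add: nth_append)
      moreover have "take k (ord (Suc n)) = take m P" unfolding oS' using 2 mn lP by simp
      moreover have "ims2 L K A \<alpha> (set (take m P)) (Suc n) (Tsel (Suc n))"
        using mx unfolding ims_eq m_def .
      ultimately show ?thesis using 2 by simp
    next
      case 3
      define p where "p = k - 1"
      have pn: "p < n" using 3 k unfolding p_def by simp
      have e1: "ord (Suc n) ! k = P ! p" unfolding oS' using 3 mn lP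
        by (simp add: nth_append p_def)
      have "take k (ord (Suc n)) = take m P @ [Suc n] @ take (k - Suc m) (drop m P)"
      proof -
        have km: "k - m = Suc (k - Suc m)" using 3 by simp
        show ?thesis unfolding oS' using 3 mn lP by (simp add: km)
      qed
      also have "set \<dots> = insert (Suc n) (set (take m P @ take (k - Suc m) (drop m P)))" by auto
      also have "take m P @ take (k - Suc m) (drop m P) = take p P"
      proof -
        have "m + (k - Suc m) = p" using 3 unfolding p_def by simp
        then show ?thesis using take_add[of m "k - Suc m" P] by simp
      qed
      finally have e2: "set (take k (ord (Suc n))) = insert (Suc n) (set (take p P))" .
      define a where "a = P ! p"
      have a1: "a \<ge> 1" using sP pn lP nth_mem[of p P] unfolding a_def by auto
      have tp: "take (Suc p) P = take p P @ [a]" unfolding a_def using pn lP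
        by (simp add: take_Suc_conv_app_nth)
      obtain T1 where T1: "is_max_set L K A \<alpha> (take (Suc (Suc p) - 1) P @ [Suc n]) T1"
        "card T1 \<le> mstar (P ! (Suc (Suc p) - 2))"
      proof -
        have c1: "j < Suc (Suc p)" "Suc (Suc p) \<le> Suc n" using 3 pn j1 unfolding p_def m_def by auto
        show ?thesis using bnd[rule_format, OF conjI[OF c1]] that by blast
      qed
      have T1': "ims2 L K A \<alpha> (set (take (Suc p) P)) (Suc n) T1" "card T1 \<le> card (Tsel a)"
      proof -
        have "Suc (Suc p) - 1 = Suc p" "Suc (Suc p) - 2 = p" by simp_all
        then show "ims2 L K A \<alpha> (set (take (Suc p) P)) (Suc n) T1"
          "card T1 \<le> card (Tsel a)" using T1 ms[OF a1] unfolding ims_eq a_def by simp_all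
      qed
      have sa: "set (take (Suc p) P) = insert a (set (take p P))" using tp by simp
      have T1i: "ims2 L K A \<alpha> (insert a (set (take p P))) (Suc n) T1" using T1'(1) unfolding sa .
      have bd: "card T \<le> card (Tsel a)" if fT: "feas2 L K A \<alpha> (insert a (set (take p P))) (Suc n) T" for T
        using T1i unfolding ims2_def
      proof (elim disjE conjE)
        assume "\<forall>T'. feas2 L K A \<alpha> (insert a (set (take p P))) (Suc n) T' \<longrightarrow> card T' \<le> card T1"
        then have "card T \<le> card T1" using fT by blast
        then show ?thesis using T1'(2) by linarith
      next
        assume "\<not> (\<exists>T'. feas2 L K A \<alpha> (insert a (set (take p P))) (Suc n) T')"
        then show ?thesis using fT by blast
      qed
      have ia: "ims2 L K A \<alpha> (set (take p P)) a (Tsel a)" using iP pn lP unfolding a_def by simp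
      have "ims2 L K A \<alpha> (insert (Suc n) (set (take p P))) a (Tsel a)" by (rule ims2_step[OF ia bd])
      then show ?thesis unfolding e1 e2 a_def .
    qed
  qed
  show ?case
  proof (intro conjI allI impI)
    show "distinct (ord (Suc n))" by (rule dist)
    show "set (ord (Suc n)) = {1..Suc n}" by (rule st)
    fix k assume "k < length (ord (Suc n))"
    then show "ims2 L K A \<alpha> (set (take k (ord (Suc n)))) (ord (Suc n) ! k) (Tsel (ord (Suc n) ! k))"
      using inv lS by simp
  qed
qed

theorem mainTheorem18:
  fixes L :: "nat \<Rightarrow> 'u set" and A :: "nat \<Rightarrow> 'u set" and K :: nat and \<alpha> :: real
    and ord :: "nat \<Rightarrow> nat list" and Tsel :: "nat \<Rightarrow> 'u set" and mstar :: "nat \<Rightarrow> nat"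
  assumes "countable (UNIV :: 'u set)" and "infinite (UNIV :: 'u set)"
    and "\<forall>i\<ge>1. infinite (L i)"
    and "is_partition K A"
    and "0 \<le> \<alpha>" and "\<alpha> \<le> 1"
    and "rep_run L K A \<alpha> ord Tsel mstar"
  shows "\<forall>i\<ge>1. \<forall>t\<ge>i. \<forall>k. k < length (ord t) \<and> ord t ! k = i \<longrightarrow>
           is_max_set L K A \<alpha> (take (Suc k) (ord t)) (Tsel i)"
proof (intro allI impI)
  fix i t k
  assume "k < length (ord t) \<and> ord t ! k = i"
  then have k: "k < length (ord t)" "ord t ! k = i" by auto
  have "ims2 L K A \<alpha> (set (take k (ord t))) (ord t ! k) (Tsel (ord t ! k))"
    using main_inv[OF assms(7), of t] k(1) by simp
  moreover have "take (Suc k) (ord t) = take k (ord t) @ [ord t ! k]"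
    using k by (simp add: take_Suc_conv_app_nth)
  ultimately show "is_max_set L K A \<alpha> (take (Suc k) (ord t)) (Tsel i)"
    unfolding k(2)[symmetric] by (simp only: ims_eq)
qed

end
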